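(* Let $\alpha_H$ be the harmonic partition and let $\mathcal L^{(\alpha_H)}_n$ and $\mathcal L_n$ be the sum-level sets of the alternating and the classical Lüroth maps, as in the context. Then \[\lim_{n\to\infty}\lambda(\mathcal L^{(\alpha_H)}_n)=\lim_{n\to\infty}\lambda(\mathcal L_n)=0.\]
   Context: $\lambda$ is Lebesgue measure on $\mathcal U=[0,1]$. The harmonic partition $\alpha_H=\{A_n\}$ has $A_n=(1/(n+1),1/n]$, so $a_n=1/(n(n+1))$, $t_n=1/n$. The alternating Lüroth map is $L_{\alpha_H}(x)=-n(n+1)x+(n+1)$ for $x\in A_n$, $L_{\alpha_H}(0)=0$; its cylinders are $C(\ell_1,\dots,\ell_k)=\{x: L_{\alpha_H}^{i-1}(x)\in A_{\ell_i},\ i=1,\dots,k\}$ and $\mathcal L^{(\alpha_H)}_n$ is the union of all $C(\ell_1,\dots,\ell_k)$, $k\in\mathbb N$, with $\sum_i\ell_i=n$. The classical Lüroth map is $L(x)=n(n+1)x-n$ for $x\in[1/(n+1),1/n)$, $n\ge2$, $L(x)=2x-1$ for $x\in[1/2,1]$, $L(0)=0$; with digit intervals $B_1=[1/2,1]$, $B_n=[1/(n+1),1/n)$ for $n\ge2$, its cylinders are $\{x:L^{i-1}(x)\in B_{\ell_i},\ i=1,\dots,k\}$ and $\mathcal L_n$ is the union of those cylinders with $\sum_i\ell_i=n$. *)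

theory Defs
  imports "HOL-Analysis.Analysis"
begin

definition harmA :: "nat \<Rightarrow> real set" where
  "harmA n = {1 / real (n + 1) <.. 1 / real n}"

definition altL :: "real \<Rightarrow> real" where
  "altL x = (if x = 0 then 0 else
     (let n = (THE n. n \<ge> 1 \<and> x \<in> harmA n)
      in - (real n * real (n + 1)) * x + real (n + 1)))"

definition lurB :: "nat \<Rightarrow> real set" where
  "lurB n = (if n = 1 then {1/2 .. 1} else {1 / real (n + 1) ..< 1 / real n})"

definition lurL :: "real \<Rightarrow> real" where
  "lurL x = (if x = 0 then 0 else
     (let n = (THE n. n \<ge> 1 \<and> x \<in> lurB n)
      in if n = 1 then 2 * x - 1 else real n * real (n + 1) * x - real n))"

definition cyl :: "(real \<Rightarrow> real) \<Rightarrow> (nat \<Rightarrow> real set) \<Rightarrow> nat list \<Rightarrow> real set" where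
  "cyl T D ls = {x \<in> {0..1}. \<forall>i < length ls. (T ^^ i) x \<in> D (ls ! i)}"

definition sumlevel :: "(real \<Rightarrow> real) \<Rightarrow> (nat \<Rightarrow> real set) \<Rightarrow> nat \<Rightarrow> real set" where
  "sumlevel T D n = (\<Union>ls \<in> {ls. ls \<noteq> [] \<and> (\<forall>l \<in> set ls. l \<ge> 1) \<and> sum_list ls = n}. cyl T D ls)"

end

theory Submission
  imports Defs "HOL-Analysis.Analysis"
begin


definition pp :: "nat \<Rightarrow> real" where "pp k = 1 / (real k * real (k+1))"
definition rr :: "nat \<Rightarrow> real" where "rr j = 1 / (real j + 1)"

lemma pp_tel: "1 \<le> l \<Longrightarrow> pp l = 1/real l - 1/real (l+1)"
  by (simp add: pp_def diff_frac_eq)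

lemma pp_nonneg: "0 \<le> pp k" by (simp add: pp_def)
lemma rr_nonneg: "0 \<le> rr k" by (simp add: rr_def)

lemma psum: "t \<le> m \<Longrightarrow> (\<Sum>j<t. pp (m-j)) = 1/(real (m-t)+1) - 1/(real m+1)"
proof (induction t)
  case 0 then show ?case by simp
next
  case (Suc t)
  define d where "d = m - Suc t"
  have m: "m - t = Suc d" using Suc.prems unfolding d_def by simp
  have "(\<Sum>j<Suc t. pp (m-j)) = 1/(real (m-t)+1) - 1/(real m+1) + pp (m - t)"
    using Suc by simp
  also have "\<dots> = 1/(real d+1) - 1/(real m+1)"
    unfolding m pp_def by (simp add: divide_simps) (simp add: algebra_simps)
  finally show ?case unfolding d_def .
qed

lemma renewal_to_zero:
  fixes w :: "nat \<Rightarrow> real"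
  assumes nonneg: "\<And>n. 0 \<le> w n" and w0: "w 0 = 1"
    and rec: "\<And>m. w (Suc m) = (\<Sum>j\<le>m. pp (Suc m - j) * w j)"
  shows "w \<longlonglongrightarrow> 0"
proof -
  have ident: "(\<Sum>j\<le>n. w j * rr (n-j)) = 1" for n
  proof (induction n)
    case 0 then show ?case by (simp add: w0 rr_def)
  next
    case (Suc n)
    have e: "rr (Suc n - j) = rr (n-j) - pp (Suc n - j)" if "j \<le> n" for j
    proof -
      define q where "q = n - j"
      have "Suc n - j = Suc q" using that q_def by simp
      then show ?thesis unfolding rr_def pp_def q_def[symmetric] by (simp add: divide_simps) (simp add: algebra_simps)
    qed
    have "(\<Sum>j\<le>Suc n. w j * rr (Suc n-j)) = (\<Sum>j\<le>n. w j * rr (Suc n-j)) + w (Suc n)"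
      by (simp add: rr_def)
    also have "(\<Sum>j\<le>n. w j * rr (Suc n-j)) = (\<Sum>j\<le>n. w j * rr (n-j) - pp (Suc n - j) * w j)"
      by (intro sum.cong) (auto simp: e algebra_simps)
    also have "\<dots> = 1 - w (Suc n)"
      by (simp add: sum_subtractf Suc rec)
    finally show ?case by simp
  qed
  have le1: "w n \<le> 1" for n
  proof -
    have "w n * rr (n - n) \<le> (\<Sum>j\<le>n. w j * rr (n-j))"
      by (rule member_le_sum) (auto intro: mult_nonneg_nonneg nonneg rr_nonneg)
    then show ?thesis using ident[of n] by (simp add: rr_def)
  qed
  define M where "M N = Sup (w ` {N..})" for N
  have bdd: "bdd_above (w ` {N..})" for N using le1 by (intro bdd_aboveI[where M=1]) auto
  have wM: "j \<ge> N \<Longrightarrow> w j \<le> M N" for j N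
    unfolding M_def by (rule cSup_upper) (auto simp: bdd)
  have M0: "0 \<le> M N" for N using wM[of N N] nonneg[of N] by simp
  define L where "L = Inf (range M)"
  have bddb: "bdd_below (range M)" using M0 by (intro bdd_belowI[where m=0]) auto
  have L0: "0 \<le> L" unfolding L_def by (rule cInf_greatest) (auto simp: M0)
  have LM: "L \<le> M N" for N unfolding L_def by (rule cInf_lower) (auto simp: bddb)
  have P1: "\<exists>N0. \<forall>j\<ge>N0. w j \<le> L + d" if "d > 0" for d
  proof -
    have "Inf (range M) < L + d" using that L_def by simp
    then obtain N0 where "M N0 < L + d" using cInf_lessD[of "range M" "L+d"] by auto
    then show ?thesis using wM by (meson less_le_not_le order_trans)
  qed
  have P2: "\<exists>n\<ge>N. w n > L - d" if "d > 0" for d N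
  proof -
    have "L - d < Sup (w ` {N..})" using LM[of N] that M_def by simp
    then obtain x where "x \<in> w ` {N..}" "L - d < x" using less_cSupD[of "w ` {N..}"] by blast
    then show ?thesis by auto
  qed
  have sticky: "w (m-1) \<ge> L - 3*d - 2/(real N1+1)"
    if d: "d > 0" and N0: "\<forall>j\<ge>N0. w j \<le> L+d" and N1: "N1 \<ge> 1" and m: "m \<ge> N0+N1+1"
      and wm: "w m \<ge> L - d" for d N0 N1 m
  proof -
    obtain m' where mm: "m = Suc m'" using m by (cases m) auto
    define t where "t = m - N1"
    have t: "t \<le> m'" "N0 \<le> t" "m - t = N1" using m N1 mm unfolding t_def by auto
    have "w m = (\<Sum>j<Suc m'. pp (m - j) * w j)" unfolding mm rec lessThan_Suc_atMost ..
    also have "\<dots> = pp 1 * w m' + (\<Sum>j<m'. pp (m - j) * w j)" by (simp add: mm)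
    also have "(\<Sum>j<m'. pp (m - j) * w j) = (\<Sum>j\<in>{0..<t}. pp (m - j) * w j) + (\<Sum>j\<in>{t..<m'}. pp (m - j) * w j)"
      using t by (simp add: sum.atLeastLessThan_concat lessThan_atLeast0)
    also have "(\<Sum>j\<in>{0..<t}. pp (m - j) * w j) \<le> (\<Sum>j\<in>{0..<t}. pp (m - j))"
      by (intro sum_mono) (auto intro: mult_left_le le1 pp_nonneg)
    also have "\<dots> = 1/(real N1 + 1) - 1/(real m+1)"
      using psum[of t m] t mm by (simp add: lessThan_atLeast0)
    also have "(\<Sum>j\<in>{t..<m'}. pp (m - j) * w j) \<le> (\<Sum>j\<in>{t..<m'}. pp (m - j) * (L+d))"
      using N0 t(2) by (intro sum_mono mult_left_mono) (auto intro: pp_nonneg)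
    also have "\<dots> \<le> (\<Sum>j<m'. pp (m - j) * (L+d))"
      by (rule sum_mono2) (use L0 d in \<open>auto intro!: mult_nonneg_nonneg pp_nonneg\<close>)
    also have "\<dots> = (L+d) * (1/(real (m-m')+1) - 1/(real m+1))"
      using psum[of m' m] mm by (simp add: sum_distrib_left[symmetric] mult.commute)
    finally have "w m \<le> w m'/2 + 1/(real N1 + 1) - 1/(real m+1) + (L+d) * (1/2 - 1/(real m+1))"
      using mm by (simp add: pp_def)
    moreover have "(L+d) * (1/2 - 1/(real m+1)) \<le> (L+d)/2"
      using L0 d by (simp add: field_simps)
    moreover have "0 \<le> 1/(real m+1)" by simp
    ultimately have "w m \<le> w m'/2 + 1/(real N1 + 1) + (L+d)/2" by linarith
    moreover have "\<And>a b q c e::real. a \<le> b/2 + q + c/2 \<Longrightarrow> L - d \<le> a \<Longrightarrow> c = L + d \<Longrightarrow> b \<ge> L - 3*d - 2*q" by linarith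
    ultimately have "w m' \<ge> L - 3*d - 2 * (1/(real N1+1))" using wm by blast
    then show ?thesis using mm by simp
  qed
  have claim: "\<forall>e>0. \<forall>N. \<exists>n\<ge>N+K. \<forall>k\<le>K. w (n-k) \<ge> L - e" for K
  proof (induction K)
    case 0
    show ?case
    proof (intro allI impI)
      fix e :: real and N assume "e > 0"
      then obtain n where "n \<ge> N" "w n > L - e" using P2 by blast
      then show "\<exists>n\<ge>N+0. \<forall>k\<le>0. w (n-k) \<ge> L - e" by auto
    qed
  next
    case (Suc K)
    show ?case
    proof (intro allI impI)
      fix e :: real and N assume e: "e > 0"
      define d where "d = e/8"
      have d: "d > 0" using e d_def by simp
      obtain N0 where N0: "\<forall>j\<ge>N0. w j \<le> L + d" using P1[OF d] by blast
      define N1 where "N1 = nat \<lceil>4/e\<rceil> + 1"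
      have N1: "N1 \<ge> 1" "real N1 \<ge> 4/e" unfolding N1_def by linarith+
      have N1e: "2/(real N1 + 1) \<le> e/2"
      proof -
        have "4/e \<le> real N1 + 1" using N1 by simp
        then have "4 \<le> e * (real N1 + 1)" using e by (simp add: field_simps)
        then show ?thesis using e by (simp add: field_simps)
      qed
      obtain n where n: "n \<ge> N + N0 + N1 + 1 + K" and hn: "\<forall>k\<le>K. w (n-k) \<ge> L - d"
        using Suc.IH d by blast
      have "w (n - K - 1) \<ge> L - 3*d - 2/(real N1+1)"
        using sticky[OF d N0 N1(1), of "n-K"] hn n by auto
      moreover have "\<And>x q. L - 3*d - q \<le> x \<Longrightarrow> q \<le> e/2 \<Longrightarrow> L - e \<le> x"
        using e d_def by linarith
      ultimately have last: "w (n - Suc K) \<ge> L - e" using N1e by simp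
      show "\<exists>n\<ge>N + Suc K. \<forall>k\<le>Suc K. w (n-k) \<ge> L - e"
      proof (intro exI conjI allI impI)
        show "n \<ge> N + Suc K" using n by simp
        fix k assume "k \<le> Suc K"
        then show "w (n-k) \<ge> L - e"
        proof (cases "k \<le> K")
          case True then show ?thesis using hn d_def e by force
        next
          case False then have "k = Suc K" using \<open>k \<le> Suc K\<close> by simp
          then show ?thesis using last by simp
        qed
      qed
    qed
  qed
  have Lz: "L = 0"
  proof (rule ccontr)
    assume "L \<noteq> 0" then have Lp: "L > 0" using L0 by simp
    have ns: "\<not> summable rr"
    proof
      assume "summable rr"
      then have "summable (\<lambda>n. inverse (real (Suc n)))" unfolding rr_def
        by (simp add: divide_inverse add.commute)
      then have "summable (\<lambda>n. inverse (real n))" using summable_Suc_iff[where f="\<lambda>n. inverse (real n)"] by simp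
      then show False using not_summable_harmonic[where 'a=real] by simp
    qed
    obtain K where K: "(\<Sum>k<K. rr k) > 2/L"
    proof (rule ccontr)
      assume "\<not> thesis"
      then have "\<forall>K. (\<Sum>k<K. rr k) \<le> 2/L" using that by (meson not_le)
      then have "summable rr" by (intro summableI_nonneg_bounded[where x="2/L"]) (auto simp: rr_nonneg)
      then show False using ns by simp
    qed
    obtain n where n: "n \<ge> 0 + K" and hn: "\<forall>k\<le>K. w (n-k) \<ge> L - L/2"
      using claim[of K] Lp by (meson half_gt_zero)
    have "(L/2) * (\<Sum>k<K. rr k) = (\<Sum>k<K. (L/2) * rr k)" by (simp add: sum_distrib_left)
    also have "\<dots> \<le> (\<Sum>k<K. w (n-k) * rr k)"
      using hn by (intro sum_mono mult_right_mono) (auto simp: rr_nonneg)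
    also have "\<dots> \<le> (\<Sum>k\<le>n. w (n-k) * rr k)"
      using n by (intro sum_mono2) (auto intro: mult_nonneg_nonneg nonneg rr_nonneg)
    also have "\<dots> = (\<Sum>k\<in>{0..n}. w (n-k) * rr k)" by (simp add: atMost_atLeast0)
    also have "\<dots> = (\<Sum>k\<in>{0..n}. w (n - (n + 0 - k)) * rr (n + 0 - k))"
      by (rule sum.atLeastAtMost_rev)
    also have "\<dots> = (\<Sum>k\<in>{0..n}. w k * rr (n - k))"
      by (intro sum.cong) auto
    also have "\<dots> = 1" using ident[of n] by (simp add: atMost_atLeast0)
    finally have "(L/2) * (\<Sum>k<K. rr k) \<le> 1" .
    moreover have "(L/2) * (\<Sum>k<K. rr k) > (L/2) * (2/L)" using K Lp by (intro mult_strict_left_mono) auto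
    ultimately show False using Lp by simp
  qed
  show ?thesis
  proof (rule LIMSEQ_I)
    fix r :: real assume "r > 0"
    then obtain N0 where "\<forall>j\<ge>N0. w j \<le> L + r/2" using P1[of "r/2"] by auto
    moreover have "norm (w n - 0) < r" if "w n \<le> L + r/2" for n
      using that Lz nonneg[of n] \<open>r>0\<close> by simp
    ultimately show "\<exists>no. \<forall>n\<ge>no. norm (w n - 0) < r" by blast
  qed
qed

definition cyl' :: "(real \<Rightarrow> real) \<Rightarrow> (nat \<Rightarrow> real set) \<Rightarrow> nat list \<Rightarrow> real set" where
  "cyl' T D ls = {x. \<forall>i < length ls. (T ^^ i) x \<in> D (ls ! i)}"

lemma cyl'_cover:
  assumes hD: "\<And>l. 1 \<le> l \<Longrightarrow> D l \<subseteq> {1/real(l+1) .. 1/real l}"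
    and hT: "\<And>l. 1 \<le> l \<Longrightarrow> \<exists>a \<sigma>. \<bar>\<sigma>\<bar> = pp l \<and> (\<forall>x\<in>D l. x = a + \<sigma> * T x)"
  shows "ls \<noteq> [] \<Longrightarrow> \<forall>l\<in>set ls. 1 \<le> l \<Longrightarrow> \<exists>c. cyl' T D ls \<subseteq> {c .. c + prod_list (map pp ls)}"
proof (induction ls rule: list_nonempty_induct)
  case (single l)
  have "1 \<le> l" using single by simp
  then have "1/real(l+1) + pp l = 1/real l" by (simp add: pp_tel)
  moreover have "cyl' T D [l] = D l" by (simp add: cyl'_def)
  ultimately have "cyl' T D [l] \<subseteq> {1/real(l+1) .. 1/real(l+1) + prod_list (map pp [l])}"
    using hD[of l] single by simp
  then show ?case by blast
next
  case (cons l ls)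
  obtain c where c: "cyl' T D ls \<subseteq> {c .. c + prod_list (map pp ls)}" using cons.IH cons.prems by auto
  obtain a \<sigma> where s: "\<bar>\<sigma>\<bar> = pp l" "\<forall>x\<in>D l. x = a + \<sigma> * T x" using hT[of l] cons.prems by auto
  define w where "w = prod_list (map pp ls)"
  have w0: "0 \<le> w" unfolding w_def by (intro prod_list_nonneg) (auto simp: pp_nonneg)
  have sub: "x \<in> D l \<and> T x \<in> {c..c+w}" if "x \<in> cyl' T D (l#ls)" for x
  proof -
    have "x \<in> D l" using that by (force simp: cyl'_def)
    moreover have "T x \<in> cyl' T D ls"
      unfolding cyl'_def
    proof (intro CollectI allI impI)
      fix i assume "i < length ls"
      then have "(T ^^ Suc i) x \<in> D ((l#ls) ! Suc i)" using that by (auto simp: cyl'_def)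
      then show "(T ^^ i) (T x) \<in> D (ls ! i)" by (simp add: funpow_Suc_right del: funpow.simps)
    qed
    ultimately show ?thesis using c w_def by auto
  qed
  show ?case
  proof (cases "\<sigma> \<ge> 0")
    case True
    have "x \<in> {a + \<sigma>*c .. a + \<sigma>*c + \<sigma>*w}" if "x \<in> cyl' T D (l#ls)" for x
    proof -
      from sub[OF that] have x: "x = a + \<sigma> * T x" "c \<le> T x" "T x \<le> c + w" using s by auto
      have "\<sigma>*c \<le> \<sigma> * T x" "\<sigma> * T x \<le> \<sigma> * (c+w)" using x True by (auto intro: mult_left_mono)
      then show ?thesis using x by (simp add: algebra_simps)
    qed
    moreover have "\<sigma> * w = prod_list (map pp (l#ls)) " using s True w_def by simp
    ultimately show ?thesis by (metis add.assoc subsetI)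
  next
    case False
    have "x \<in> {a + \<sigma>*(c+w) .. a + \<sigma>*(c+w) - \<sigma>*w}" if "x \<in> cyl' T D (l#ls)" for x
    proof -
      from sub[OF that] have x: "x = a + \<sigma> * T x" "c \<le> T x" "T x \<le> c + w" using s by auto
      have "\<sigma>*c \<ge> \<sigma> * T x" "\<sigma> * T x \<ge> \<sigma> * (c+w)" using x False
        by (auto intro: mult_left_mono_neg)
      then show ?thesis using x by (simp add: algebra_simps)
    qed
    moreover have "- \<sigma> * w = prod_list (map pp (l#ls)) " using s False w_def by simp
    ultimately show ?thesis by (metis diff_conv_add_uminus mult_minus_left subsetI)
  qed
qed



definition comps :: "nat \<Rightarrow> nat list set" where
  "comps n = {ls. (\<forall>l\<in>set ls. 1 \<le> l) \<and> sum_list ls = n}"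
definition WW :: "nat \<Rightarrow> real" where
  "WW n = (\<Sum>ls\<in>comps n. prod_list (map pp ls))"

lemma length_le_sum: "\<forall>l\<in>set ls. 1 \<le> l \<Longrightarrow> length ls \<le> sum_list (ls::nat list)"
  by (induction ls) auto

lemma finite_comps: "finite (comps n)"
proof (rule finite_subset)
  show "comps n \<subseteq> {xs. set xs \<subseteq> {0..n} \<and> length xs \<le> n}"
    unfolding comps_def using length_le_sum member_le_sum_list by fastforce
  show "finite {xs. set xs \<subseteq> {0..n} \<and> length xs \<le> n}" by (rule finite_lists_length_le) simp
qed

lemma comps0: "comps 0 = {[]}"
proof -
  have "ls = []" if "\<forall>l\<in>set ls. 1 \<le> l" "sum_list ls = (0::nat)" for ls
    using that by (cases ls) auto
  then show ?thesis unfolding comps_def by auto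
qed

lemma compsSuc: "comps (Suc m) = (\<Union>j\<le>m. Cons (Suc m - j) ` comps j)"
proof
  show "comps (Suc m) \<subseteq> (\<Union>j\<le>m. Cons (Suc m - j) ` comps j)"
  proof
    fix ls assume "ls \<in> comps (Suc m)"
    then have h: "\<forall>l\<in>set ls. 1 \<le> l" "sum_list ls = Suc m" unfolding comps_def by auto
    then obtain l ls' where ls: "ls = l # ls'" by (cases ls) auto
    have "l \<ge> 1" using h ls by simp
    then have "sum_list ls' \<le> m" "l = Suc m - sum_list ls'" using h ls by auto
    moreover have "ls' \<in> comps (sum_list ls')" using h ls unfolding comps_def by auto
    ultimately show "ls \<in> (\<Union>j\<le>m. Cons (Suc m - j) ` comps j)" using ls by blast
  qed
  show "(\<Union>j\<le>m. Cons (Suc m - j) ` comps j) \<subseteq> comps (Suc m)"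
    unfolding comps_def by auto
qed

lemma WW0: "WW 0 = 1" unfolding WW_def comps0 by simp

lemma WW_nonneg: "0 \<le> WW n"
  unfolding WW_def by (intro sum_nonneg prod_list_nonneg) (auto simp: pp_nonneg)

lemma WWSuc: "WW (Suc m) = (\<Sum>j\<le>m. pp (Suc m - j) * WW j)"
proof -
  have "WW (Suc m) = (\<Sum>j\<le>m. \<Sum>ls\<in>Cons (Suc m - j) ` comps j. prod_list (map pp ls))"
    unfolding WW_def compsSuc
    by (rule sum.UNION_disjoint) (auto simp: finite_comps)
  also have "\<dots> = (\<Sum>j\<le>m. \<Sum>ls\<in>comps j. pp (Suc m - j) * prod_list (map pp ls))"
    by (rule sum.cong[OF refl], subst sum.reindex) auto
  also have "\<dots> = (\<Sum>j\<le>m. pp (Suc m - j) * WW j)"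
    unfolding WW_def by (simp add: sum_distrib_left)
  finally show ?thesis .
qed

lemma WW_lim: "WW \<longlonglongrightarrow> 0"
  by (rule renewal_to_zero[OF WW_nonneg WW0 WWSuc])

lemma sumlevel_bound:
  assumes hD: "\<And>l. 1 \<le> l \<Longrightarrow> D l \<subseteq> {1/real(l+1) .. 1/real l}"
    and hT: "\<And>l. 1 \<le> l \<Longrightarrow> \<exists>a \<sigma>. \<bar>\<sigma>\<bar> = pp l \<and> (\<forall>x\<in>D l. x = a + \<sigma> * T x)"
  shows "measure lebesgue (sumlevel T D n) \<le> WW n"
proof -
  define I where "I = {ls. ls \<noteq> [] \<and> (\<forall>l \<in> set ls. l \<ge> 1) \<and> sum_list ls = n}"
  have IC: "I \<subseteq> comps n" unfolding I_def comps_def by auto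
  have fI: "finite I" using finite_subset[OF IC finite_comps] .
  define c where "c ls = (SOME c. cyl' T D ls \<subseteq> {c .. c + prod_list (map pp ls)})" for ls
  have c: "cyl T D ls \<subseteq> {c ls .. c ls + prod_list (map pp ls)}" if "ls \<in> I" for ls
  proof -
    have "\<exists>c. cyl' T D ls \<subseteq> {c .. c + prod_list (map pp ls)}"
      using cyl'_cover[OF hD hT] that unfolding I_def by auto
    then have "cyl' T D ls \<subseteq> {c ls .. c ls + prod_list (map pp ls)}"
      unfolding c_def by (rule someI_ex)
    moreover have "cyl T D ls \<subseteq> cyl' T D ls" unfolding cyl_def cyl'_def by auto
    ultimately show ?thesis by blast
  qed
  define U where "U = (\<Union>ls\<in>I. {c ls .. c ls + prod_list (map pp ls)})"
  have sub: "sumlevel T D n \<subseteq> U" unfolding sumlevel_def U_def I_def[symmetric] using c by blast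
  have pn: "0 \<le> prod_list (map pp ls)" for ls by (intro prod_list_nonneg) (auto simp: pp_nonneg)
  have ivl: "{a..b::real} \<in> fmeasurable lebesgue" for a b
    using lmeasurable_cbox[of a b] by simp
  have Ufm: "U \<in> fmeasurable lebesgue" unfolding U_def
    by (intro fmeasurable.finite_UN fI ivl)
  have "measure lebesgue U \<le> (\<Sum>ls\<in>I. measure lebesgue {c ls .. c ls + prod_list (map pp ls)})"
    unfolding U_def by (rule measure_UNION_le[OF fI]) simp
  also have "\<dots> = (\<Sum>ls\<in>I. prod_list (map pp ls))" using pn by simp
  also have "\<dots> \<le> WW n" unfolding WW_def
    by (rule sum_mono2[OF finite_comps IC]) (simp add: pn)
  finally have UW: "measure lebesgue U \<le> WW n" .
  show ?thesis
  proof (cases "sumlevel T D n \<in> sets lebesgue")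
    case True
    then show ?thesis using measure_mono_fmeasurable[OF sub True Ufm] UW by linarith
  next
    case False
    then show ?thesis using measure_notin_sets[OF False] WW_nonneg by simp
  qed
qed



lemma inv_le: "1 \<le> n \<Longrightarrow> n \<le> l \<Longrightarrow> 1/real l \<le> 1/real (n::nat)"
  by (rule divide_left_mono) auto

lemma harm_unique: "x \<in> harmA l \<Longrightarrow> x \<in> harmA n \<Longrightarrow> 1 \<le> l \<Longrightarrow> 1 \<le> n \<Longrightarrow> n = l"
proof (rule ccontr)
  assume h: "x \<in> harmA l" "x \<in> harmA n" "1 \<le> l" "1 \<le> n" "n \<noteq> l"
  have *: False if "x \<in> harmA a" "x \<in> harmA b" "a < b" for a b
  proof -
    have "1/real b \<le> 1/real (Suc a)" using inv_le[of "Suc a" b] that by simp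
    then show False using that unfolding harmA_def by auto
  qed
  show False using h *[of l n] *[of n l] by (cases "n < l") auto
qed

lemma altL_eq: "x \<in> harmA l \<Longrightarrow> 1 \<le> l \<Longrightarrow> altL x = - (real l * real (l + 1)) * x + real (l + 1)"
proof -
  assume h: "x \<in> harmA l" "1 \<le> l"
  have "x > 0" using h unfolding harmA_def by (auto intro: less_trans[rotated])
  moreover have "(THE n. n \<ge> 1 \<and> x \<in> harmA n) = l"
    using h harm_unique by (intro the_equality) auto
  ultimately show ?thesis unfolding altL_def by (simp add: Let_def)
qed

lemma lurB_bounds: "x \<in> lurB l \<Longrightarrow> 1 \<le> l \<Longrightarrow> 1/real (l+1) \<le> x \<and> x \<le> 1/real l \<and> (2 \<le> l \<longrightarrow> x < 1/real l)"
  unfolding lurB_def by (auto split: if_splits)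

lemma lur_unique: "x \<in> lurB l \<Longrightarrow> x \<in> lurB n \<Longrightarrow> 1 \<le> l \<Longrightarrow> 1 \<le> n \<Longrightarrow> n = l"
proof (rule ccontr)
  assume h: "x \<in> lurB l" "x \<in> lurB n" "1 \<le> l" "1 \<le> n" "n \<noteq> l"
  have *: False if "x \<in> lurB a" "x \<in> lurB b" "a < b" "1 \<le> a" for a b
  proof -
    have "1/real b \<le> 1/real (Suc a)" using inv_le[of "Suc a" b] that by simp
    then show False using that lurB_bounds[of x a] lurB_bounds[of x b] by auto
  qed
  show False using h *[of l n] *[of n l] by (cases "n < l") auto
qed

lemma lurL_eq: "x \<in> lurB l \<Longrightarrow> 1 \<le> l \<Longrightarrow> lurL x = real l * real (l + 1) * x - real l"
proof -
  assume h: "x \<in> lurB l" "1 \<le> l"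
  have "x > 0" using lurB_bounds[OF h] by (smt (verit) divide_pos_pos of_nat_0_less_iff zero_less_Suc Suc_eq_plus1)
  moreover have "(THE n. n \<ge> 1 \<and> x \<in> lurB n) = l"
    using h lur_unique by (intro the_equality) auto
  ultimately show ?thesis unfolding lurL_def by (simp add: Let_def)
qed

theorem corollary5p1:
  shows "(\<lambda>n. measure lebesgue (sumlevel altL harmA n)) \<longlonglongrightarrow> 0
       \<and> (\<lambda>n. measure lebesgue (sumlevel lurL lurB n)) \<longlonglongrightarrow> 0"
proof
  have lim: "(\<lambda>n. measure lebesgue (sumlevel T D n)) \<longlonglongrightarrow> 0"
    if hD: "\<And>l. 1 \<le> l \<Longrightarrow> D l \<subseteq> {1/real(l+1) .. 1/real l}"
    and hT: "\<And>l. 1 \<le> l \<Longrightarrow> \<exists>a \<sigma>. \<bar>\<sigma>\<bar> = pp l \<and> (\<forall>x\<in>D l. x = a + \<sigma> * T x)" for T D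
  proof (rule real_tendsto_sandwich[OF _ _ tendsto_const WW_lim])
    show "\<forall>\<^sub>F n in sequentially. 0 \<le> measure lebesgue (sumlevel T D n)" by simp
    show "\<forall>\<^sub>F n in sequentially. measure lebesgue (sumlevel T D n) \<le> WW n"
      using sumlevel_bound[OF hD hT] by simp
  qed
  show "(\<lambda>n. measure lebesgue (sumlevel altL harmA n)) \<longlonglongrightarrow> 0"
  proof (rule lim)
    show "harmA l \<subseteq> {1/real(l+1) .. 1/real l}" for l unfolding harmA_def by auto
    fix l :: nat assume l: "1 \<le> l"
    have "x = 1/real l + (- pp l) * altL x" if "x \<in> harmA l" for x
    proof -
      have k: "pp l * (real l * real (l+1)) = 1" using l by (simp add: pp_def)
      have k2: "pp l * real (l+1) = 1/real l" using l by (simp add: pp_def)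
      have "1/real l + (- pp l) * altL x = 1/real l + (pp l * (real l * real (l+1))) * x - pp l * real (l+1)"
        unfolding altL_eq[OF that l] by (simp add: algebra_simps)
      then show ?thesis unfolding k k2 by simp
    qed
    then show "\<exists>a \<sigma>. \<bar>\<sigma>\<bar> = pp l \<and> (\<forall>x\<in>harmA l. x = a + \<sigma> * altL x)"
      by (intro exI[of _ "1/real l"] exI[of _ "- pp l"]) (auto simp: pp_nonneg)
  qed
  show "(\<lambda>n. measure lebesgue (sumlevel lurL lurB n)) \<longlonglongrightarrow> 0"
  proof (rule lim)
    show "lurB l \<subseteq> {1/real(l+1) .. 1/real l}" if "1 \<le> l" for l
      using lurB_bounds[of _ l] that by auto
    fix l :: nat assume l: "1 \<le> l"
    have "x = real l * pp l + pp l * lurL x" if "x \<in> lurB l" for x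
    proof -
      have k: "pp l * (real l * real (l+1)) = 1" using l by (simp add: pp_def)
      have "real l * pp l + pp l * lurL x = (pp l * (real l * real (l+1))) * x"
        unfolding lurL_eq[OF that l] by (simp add: algebra_simps)
      then show ?thesis unfolding k by simp
    qed
    then show "\<exists>a \<sigma>. \<bar>\<sigma>\<bar> = pp l \<and> (\<forall>x\<in>lurB l. x = a + \<sigma> * lurL x)"
      by (intro exI[of _ "real l * pp l"] exI[of _ "pp l"]) (auto simp: pp_nonneg)
  qed
qed
end
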